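(* For every integer $d\ge 8$ there exist proper subspaces $C,C'\subsetneq\mathbb{F}_2^d$ such that $C$ is integrally non-degenerate, $\mathbf 1=(1,\dots,1)\in C$, and $\mathbf x\times\mathbf y\in C'$ for all $\mathbf x,\mathbf y\in C$.
   Context: For $\mathbf v,\mathbf w\in\mathbb{F}_2^d$, $\mathbf v\times\mathbf w=(v_1w_1,\dots,v_dw_d)$. Define $B:\mathbb{Z}^d\times\mathbb{F}_2^d\to\mathbb{Z}$ by $B(\mathbf n,\mathbf v)=\sum_{i:\,v_i=1}n_i$. A subspace $C\subset\mathbb{F}_2^d$ is integrally non-degenerate if for every nonzero $\mathbf n\in\mathbb{Z}^d$ there is $\mathbf v\in C$ with $B(\mathbf n,\mathbf v)\neq 0$. *)

theory Defs
  imports Main "HOL-Library.Z2"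
begin

text \<open>Vectors of F_2^d are represented as functions nat => bit, coordinates indexed by
 0..d-1 and required to vanish outside {0..<d}.\<close>

definition F2vecs :: "nat \<Rightarrow> (nat \<Rightarrow> bit) set" where
  "F2vecs d = {v. \<forall>i. d \<le> i \<longrightarrow> v i = 0}"

definition F2subspace :: "nat \<Rightarrow> (nat \<Rightarrow> bit) set \<Rightarrow> bool" where
  "F2subspace d C \<longleftrightarrow> C \<subseteq> F2vecs d \<and> (\<lambda>_. 0) \<in> C
     \<and> (\<forall>x\<in>C. \<forall>y\<in>C. (\<lambda>i. x i + y i) \<in> C)
     \<and> (\<forall>c::bit. \<forall>x\<in>C. (\<lambda>i. c * x i) \<in> C)"

definition F2times :: "(nat \<Rightarrow> bit) \<Rightarrow> (nat \<Rightarrow> bit) \<Rightarrow> (nat \<Rightarrow> bit)" where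
  "F2times v w = (\<lambda>i. v i * w i)"

definition F2ones :: "nat \<Rightarrow> (nat \<Rightarrow> bit)" where
  "F2ones d = (\<lambda>i. if i < d then 1 else 0)"

definition Bpair :: "nat \<Rightarrow> (nat \<Rightarrow> int) \<Rightarrow> (nat \<Rightarrow> bit) \<Rightarrow> int" where
  "Bpair d n v = (\<Sum>i\<in>{i. i < d \<and> v i = 1}. n i)"

definition integrally_nondegenerate :: "nat \<Rightarrow> (nat \<Rightarrow> bit) set \<Rightarrow> bool" where
  "integrally_nondegenerate d C \<longleftrightarrow>
     (\<forall>n::nat \<Rightarrow> int. (\<exists>i<d. n i \<noteq> 0) \<longrightarrow> (\<exists>v\<in>C. Bpair d n v \<noteq> 0))"

end

theory Submission
  imports Defs
begin

lemma elim4: "(a::bit) + b + c + e = 0 \<Longrightarrow> e = a + b + c"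
  by (cases a; cases b; cases c; cases e) simp_all

lemma add4: "(a::bit) + b + c + e = 0 \<Longrightarrow> a' + b' + c' + e' = 0 \<Longrightarrow>
   (a + a') + (b + b') + (c + c') + (e + e') = 0"
  by (cases a; cases b; cases c; cases e; cases a'; cases b'; cases c'; cases e') simp_all

lemma mul4: "(a::bit) + b + c + e = 0 \<Longrightarrow> k * a + k * b + k * c + k * e = 0"
  by (cases k) simp_all

lemma key:
  fixes a0 a1 a2 a3 a4 a5 a6 a7 b0 b1 b2 b3 b4 b5 b6 b7 :: bit
  assumes "a0+a1+a2+a3=0" "a2+a3+a4+a5=0" "a4+a5+a6+a7=0" "a0+a2+a4+a6=0"
          "b0+b1+b2+b3=0" "b2+b3+b4+b5=0" "b4+b5+b6+b7=0" "b0+b2+b4+b6=0"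
  shows "a0*b0+a1*b1+a2*b2+a3*b3+a4*b4+a5*b5+a6*b6+a7*b7 = 0"
proof -
  have a3: "a3 = a0+a1+a2" using assms(1) by (rule elim4)
  have b3: "b3 = b0+b1+b2" using assms(5) by (rule elim4)
  have a5: "a5 = a2+a3+a4" using assms(2) by (rule elim4)
  have b5: "b5 = b2+b3+b4" using assms(6) by (rule elim4)
  have a6: "a6 = a0+a2+a4" using assms(4) elim4[of a0 a2 a4 a6] by (simp add: ac_simps)
  have b6: "b6 = b0+b2+b4" using assms(8) elim4[of b0 b2 b4 b6] by (simp add: ac_simps)
  have a7: "a7 = a4+a5+a6" using assms(3) by (rule elim4)
  have b7: "b7 = b4+b5+b6" using assms(7) by (rule elim4)
  show ?thesis unfolding a7 b7 a6 b6 a5 b5 a3 b3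
    by (cases a0; cases a1; cases a2; cases a4; cases b0; cases b1; cases b2; cases b4) simp_all
qed

definition ind :: "nat set \<Rightarrow> nat \<Rightarrow> bit" where
  "ind S = (\<lambda>i. if i \<in> S then 1 else 0)"

lemma Bpair_ind: "S \<subseteq> {..<d} \<Longrightarrow> Bpair d n (ind S) = sum n S"
proof -
  assume "S \<subseteq> {..<d}"
  then have "{i. i < d \<and> ind S i = 1} = S" by (auto simp: ind_def)
  then show ?thesis by (simp add: Bpair_def)
qed

lemma sum8: "(\<Sum>i<8::nat. f i) = f 0 + f 1 + f 2 + f 3 + f 4 + f 5 + f 6 + (f 7 :: 'a::comm_monoid_add)"
  by (simp add: eval_nat_numeral)

theorem proposition3p2:
  fixes d :: nat
  assumes "d \<ge> 8"
  shows "\<exists>C C'. F2subspace d C \<and> C \<noteq> F2vecs d \<and> F2subspace d C' \<and> C' \<noteq> F2vecs d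
           \<and> integrally_nondegenerate d C \<and> F2ones d \<in> C
           \<and> (\<forall>x\<in>C. \<forall>y\<in>C. F2times x y \<in> C')"
proof -
  define P :: "(nat \<Rightarrow> bit) \<Rightarrow> bool" where "P v \<longleftrightarrow>
     v 0 + v 1 + v 2 + v 3 = 0 \<and> v 2 + v 3 + v 4 + v 5 = 0 \<and> v 4 + v 5 + v 6 + v 7 = 0
     \<and> v 0 + v 2 + v 4 + v 6 = 0" for v
  define C where "C = {v \<in> F2vecs d. P v}"
  define C' where "C' = {v \<in> F2vecs d. (\<Sum>i<8. v i) = 0}"
  have sub: "F2subspace d C"
    unfolding F2subspace_def
  proof (intro conjI ballI allI)
    show "C \<subseteq> F2vecs d" by (auto simp: C_def)
    show "(\<lambda>_. 0) \<in> C" by (simp add: C_def P_def F2vecs_def)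
    fix x y assume x: "x \<in> C" and y: "y \<in> C"
    have "P (\<lambda>i. x i + y i)"
      using x y unfolding C_def P_def mem_Collect_eq
      by (intro conjI add4) blast+
    then show "(\<lambda>i. x i + y i) \<in> C" using x y by (simp add: C_def F2vecs_def)
  next
    fix c :: bit and x assume x: "x \<in> C"
    have "P (\<lambda>i. c * x i)"
      using x unfolding C_def P_def mem_Collect_eq
      by (intro conjI mul4) blast+
    then show "(\<lambda>i. c * x i) \<in> C" using x by (simp add: C_def F2vecs_def)
  qed
  have sub': "F2subspace d C'"
    unfolding F2subspace_def
  proof (intro conjI ballI allI)
    show "C' \<subseteq> F2vecs d" by (auto simp: C'_def)
    show "(\<lambda>_. 0) \<in> C'" by (simp add: C'_def F2vecs_def)
    fix x y assume x: "x \<in> C'" and y: "y \<in> C'"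
    have "(\<Sum>i<8. x i + y i) = (\<Sum>i<8. x i) + (\<Sum>i<8. y i)" by (rule sum.distrib)
    also have "\<dots> = 0" using x y by (simp only: C'_def mem_Collect_eq) simp
    finally show "(\<lambda>i. x i + y i) \<in> C'" using x y by (simp add: C'_def F2vecs_def del: add_bit_eq_xor)
  next
    fix c :: bit and x assume x: "x \<in> C'"
    have "(\<Sum>i<8. c * x i) = c * (\<Sum>i<8. x i)" by (rule sum_distrib_left[symmetric])
    also have "\<dots> = 0" using x by (simp only: C'_def mem_Collect_eq) simp
    finally show "(\<lambda>i. c * x i) \<in> C'" using x by (simp add: C'_def F2vecs_def del: mult_bit_eq_and)
  qed
  have e0: "ind {0} \<in> F2vecs d" using assms by (auto simp: F2vecs_def ind_def)
  have "ind {0} \<notin> C" by (simp add: C_def P_def ind_def)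
  then have ne: "C \<noteq> F2vecs d" using e0 by blast
  have "ind {0} \<notin> C'" by (simp add: C'_def ind_def sum8 del: add_bit_eq_xor)
  then have ne': "C' \<noteq> F2vecs d" using e0 by blast
  have ones: "F2ones d \<in> C"
    using assms by (auto simp: C_def P_def F2vecs_def F2ones_def)
  have prod: "\<forall>x\<in>C. \<forall>y\<in>C. F2times x y \<in> C'"
  proof (intro ballI)
    fix x y assume x: "x \<in> C" and y: "y \<in> C"
    have "(\<Sum>i<8. x i * y i) = 0"
      unfolding sum8 using x y unfolding C_def P_def
      by (intro key) auto
    then show "F2times x y \<in> C'"
      using x y by (auto simp: C'_def C_def F2vecs_def F2times_def)
  qed
  have indC: "ind S \<in> C" if "S \<subseteq> {..<d}" "P (ind S)" for S
    using that by (auto simp: C_def F2vecs_def ind_def)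
  have nd: "integrally_nondegenerate d C"
    unfolding integrally_nondegenerate_def
  proof (intro allI impI)
    fix n :: "nat \<Rightarrow> int"
    assume "\<exists>i<d. n i \<noteq> 0"
    then obtain i where i: "i < d" "n i \<noteq> 0" by blast
    show "\<exists>v\<in>C. Bpair d n v \<noteq> 0"
    proof (rule ccontr)
      assume H: "\<not> (\<exists>v\<in>C. Bpair d n v \<noteq> 0)"
      have Z: "sum n S = 0" if "S \<subseteq> {..<d}" "P (ind S)" for S
        using H indC[OF that] Bpair_ind[OF that(1)] by auto
      show False
      proof (cases "i < 8")
        case False
        have "sum n {i} = 0" using i False by (intro Z) (auto simp: P_def ind_def)
        then show False using i by simp
      next
        case True
        have "sum n {1,2,5,6} = 0" using assms by (intro Z) (auto simp: P_def ind_def)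
        moreover have "sum n {0,2,5,7} = 0" using assms by (intro Z) (auto simp: P_def ind_def)
        moreover have "sum n {0,3,5,6} = 0" using assms by (intro Z) (auto simp: P_def ind_def)
        moreover have "sum n {0,1,2,3,4,5,6,7} = 0" using assms by (intro Z) (auto simp: P_def ind_def)
        moreover have "sum n {0,1,2,3} = 0" using assms by (intro Z) (auto simp: P_def ind_def)
        moreover have "sum n {1,3,5,7} = 0" using assms by (intro Z) (auto simp: P_def ind_def)
        moreover have "sum n {0,1,4,5} = 0" using assms by (intro Z) (auto simp: P_def ind_def)
        moreover have "sum n {2,3,4,5} = 0" using assms by (intro Z) (auto simp: P_def ind_def)
        ultimately have "n 0 = 0 \<and> n 1 = 0 \<and> n 2 = 0 \<and> n 3 = 0 \<and> n 4 = 0 \<and> n 5 = 0 \<and> n 6 = 0 \<and> n 7 = 0"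
          by simp
        moreover have "i = 0 \<or> i = 1 \<or> i = 2 \<or> i = 3 \<or> i = 4 \<or> i = 5 \<or> i = 6 \<or> i = 7"
          using True by linarith
        ultimately show False using i by auto
      qed
    qed
  qed
  show ?thesis using sub ne sub' ne' nd ones prod by blast
qed

end
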